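(* Let $p\geq 2$ be an integer and let $A=(a_0,a_1,\dots,a_{p-1})$ be complex numbers with $a_0+a_1+\dots+a_{p-1}=0$. For a positive integer $N$ define \[ F_N(x;A)=\sum_{n=0}^{p^{N}-1} a_{v_p(n)}x^n , \] where $v_p(n)=\left(\sum_{j=0}^d n_j\right)\bmod p\in\{0,\dots,p-1\}$ for the base-$p$ expansion $n=n_dp^d+\dots+n_1p+n_0$. Let $I_N$ be the set of integers $j$ with $0\le j<p^N$ all of whose $N$ base-$p$ digits lie in $\{0,1,\dots,p-2\}$ (so $I_1=\{0,1,\dots,p-2\}$, and $I_N=\{j+kp^{N-1}: j\in I_{N-1},\,0\le k\le p-2\}$). Then for every positive integer $N$ there exist complex constants $c_j$ ($j\in I_N$) such that, with $P_N(x;C_N)=\sum_{j\in I_N} c_j x^j$, \[ F_N(x;A)=P_N(x;C_N)\prod_{m=0}^{N-1}\left(1-x^{p^m}\right). \]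
   Context: The paper defines $C_1=(c_0,\dots,c_{p-2})$, $C_N=C_{N-1}(0)\#\cdots\# C_{N-1}(p-2)$ (concatenation) with $C_{N-1}(k)=(c_{j+kp^{N-1}}: c_j\in C_{N-1})$, and $P_1(x;C_1)=c_0+c_1x+\dots+c_{p-2}x^{p-2}$, $P_N(x;C_N)=\sum_{k=0}^{p-2}x^{kp^{N-1}}P_{N-1}(x;C_{N-1}(k))$; unwinding this recursion gives exactly $P_N(x;C_N)=\sum_{j\in I_N}c_jx^j$ with $I_N$ as in the claim. In particular, when $p=2$, $I_N=\{0\}$ and $P_N$ is a constant. *)

theory Defs
  imports "HOL-Computational_Algebra.Polynomial" Complex_Main
begin

fun digit_sum :: "nat \<Rightarrow> nat \<Rightarrow> nat" where
  "digit_sum p n = (if p < 2 \<or> n = 0 then 0 else n mod p + digit_sum p (n div p))"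

definition vp :: "nat \<Rightarrow> nat \<Rightarrow> nat" where
  "vp p n = digit_sum p n mod p"

definition F_poly :: "nat \<Rightarrow> (nat \<Rightarrow> complex) \<Rightarrow> nat \<Rightarrow> complex poly" where
  "F_poly p a N = (\<Sum>n<p ^ N. monom (a (vp p n)) n)"

definition I_set :: "nat \<Rightarrow> nat \<Rightarrow> nat set" where
  "I_set p N = {j. j < p ^ N \<and> (\<forall>i<N. j div p ^ i mod p \<le> p - 2)}"

end

theory Submission
  imports Defs
begin

declare digit_sum.simps[simp del]

lemma ds0: "digit_sum p 0 = 0"
  by (subst digit_sum.simps) simp

lemma ds_step: "p \<ge> 2 \<Longrightarrow> digit_sum p n = n mod p + digit_sum p (n div p)"
proof (cases "n = 0")
  case True
  then show ?thesis by (simp add: ds0)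
next
  case False
  assume "p \<ge> 2"
  then show ?thesis using False by (subst digit_sum.simps) simp
qed

lemma digit_sum_top:
  assumes p: "p \<ge> 2"
  shows "j < p ^ N \<Longrightarrow> k < p \<Longrightarrow> digit_sum p (j + k * p ^ N) = digit_sum p j + k"
proof (induction N arbitrary: j)
  case 0
  then have j0: "j = 0" by simp
  have "digit_sum p k = k mod p + digit_sum p (k div p)" by (rule ds_step[OF p])
  also have "\<dots> = k" using 0 by (simp add: ds0)
  finally show ?case using j0 by (simp add: ds0)
next
  case (Suc N)
  have e: "j + k * p ^ Suc N = j + (k*p^N) * p" by (simp add: ac_simps)
  have d: "(j + k * p ^ Suc N) div p = j div p + k * p ^ N"
    unfolding e using p by simp
  have m: "(j + k * p ^ Suc N) mod p = j mod p"
    unfolding e by simp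
  have jl: "j div p < p ^ N" using Suc.prems p
    by (simp add: less_mult_imp_div_less mult.commute)
  have "digit_sum p (j + k * p ^ Suc N) = j mod p + digit_sum p (j div p + k * p ^ N)"
    by (subst ds_step[OF p]) (simp only: d m)
  also have "\<dots> = j mod p + digit_sum p (j div p) + k"
    using Suc.IH[OF jl Suc.prems(2)] by simp
  also have "\<dots> = digit_sum p j + k"
    by (simp add: ds_step[OF p, of j])
  finally show ?case .
qed

lemma sum_split_blocks:
  "(\<Sum>n<q*M. f n) = (\<Sum>k<q. \<Sum>j<M. f (j + k*(M::nat))::'a::comm_monoid_add)"
proof (induction q)
  case 0 then show ?case by simp
next
  case (Suc q)
  have "{..<Suc q * M} = {..<q*M} \<union> {q*M..<q*M+M}" by auto
  then have "(\<Sum>n<Suc q*M. f n) = (\<Sum>n<q*M. f n) + (\<Sum>n\<in>{q*M..<q*M+M}. f n)"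
    by (simp add: sum.union_disjoint ivl_disj_int)
  also have "(\<Sum>n\<in>{q*M..<q*M+M}. f n) = (\<Sum>j<M. f (j + q*M))"
    using sum.shift_bounds_nat_ivl[of f 0 "q*M" M] by (simp add: lessThan_atLeast0 add.commute)
  finally show ?case using Suc by simp
qed

lemma rot1: "(\<Sum>i<p. g ((i+1) mod p)) = (\<Sum>i<(p::nat). g i::'a::comm_monoid_add)"
proof (cases p)
  case 0 then show ?thesis by simp
next
  case (Suc q)
  have "(\<Sum>i<Suc q. g ((i+1) mod Suc q)) = (\<Sum>i<q. g ((i+1) mod Suc q)) + g 0"
    by simp
  also have "(\<Sum>i<q. g ((i+1) mod Suc q)) = (\<Sum>i<q. g (Suc i))"
    by (rule sum.cong) auto
  also have "(\<Sum>i<q. g (Suc i)) + g 0 = g 0 + (\<Sum>i<q. g (Suc i))" by (simp add: add.commute)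
  also have "\<dots> = sum g {..<Suc q}" by (rule sum.lessThan_Suc_shift[symmetric])
  finally show ?thesis using Suc by simp
qed

lemma rot: "(\<Sum>i<p. f ((i+k) mod p)) = (\<Sum>i<(p::nat). f i::'a::comm_monoid_add)"
proof (induction k)
  case 0
  show ?case by (rule sum.cong) auto
next
  case (Suc k)
  have "(\<Sum>i<p. f ((i+Suc k) mod p)) = (\<Sum>i<p. (\<lambda>i. f ((i+k) mod p)) ((i+1) mod p))"
    by (rule sum.cong) (auto simp: mod_add_right_eq mod_add_left_eq add.commute add.left_commute)
  also have "\<dots> = (\<Sum>i<p. f ((i+k) mod p))" by (rule rot1)
  finally show ?case using Suc by simp
qed

definition Pi_poly :: "nat \<Rightarrow> nat \<Rightarrow> complex poly" where
  "Pi_poly p N = (\<Prod>m<N. 1 - monom 1 (p ^ m))"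

lemma Pi_nz: "p \<ge> 2 \<Longrightarrow> Pi_poly p N \<noteq> 0"
proof -
  assume p: "p \<ge> 2"
  have "1 - monom 1 (p ^ m) \<noteq> (0::complex poly)" for m
  proof
    assume "1 - monom 1 (p ^ m) = (0::complex poly)"
    then have "coeff (1 - monom 1 (p ^ m) :: complex poly) 0 = 0" by simp
    then show False using p by (simp add: coeff_monom)
  qed
  then show ?thesis unfolding Pi_poly_def by (simp add: prod_zero_iff)
qed

lemma F_step:
  assumes p: "p \<ge> 2"
  shows "F_poly p a (Suc N) =
    (\<Sum>k<p. monom 1 (k * p ^ N) * F_poly p (\<lambda>i. a ((i + k) mod p)) N)"
proof -
  have "F_poly p a (Suc N) = (\<Sum>k<p. \<Sum>j<p^N. monom (a (vp p (j + k * p^N))) (j + k*p^N))"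
    unfolding F_poly_def by (simp add: sum_split_blocks)
  also have "\<dots> = (\<Sum>k<p. \<Sum>j<p^N. monom 1 (k * p ^ N) * monom (a ((vp p j + k) mod p)) j)"
  proof (intro sum.cong refl)
    fix k j assume "k \<in> {..<p}" "j \<in> {..<p^N}"
    then have "vp p (j + k * p^N) = (vp p j + k) mod p"
      using digit_sum_top[OF p, of j N k] unfolding vp_def by (simp add: mod_add_left_eq)
    then show "monom (a (vp p (j + k * p^N))) (j + k*p^N) =
       monom 1 (k * p ^ N) * monom (a ((vp p j + k) mod p)) j"
      by (simp add: mult_monom add.commute)
  qed
  finally show ?thesis unfolding F_poly_def by (simp add: sum_distrib_left)
qed

lemma main:
  assumes p: "p \<ge> 2"
  shows "(\<Sum>i<p. a i) = 0 \<Longrightarrow> \<exists>Q. F_poly p a N = Q * Pi_poly p N \<and>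
          (\<forall>t. coeff Q t \<noteq> 0 \<longrightarrow> t \<in> I_set p N)"
proof (induction N arbitrary: a)
  case 0
  show ?case
    by (rule exI[of _ "monom (a 0) 0"])
       (auto simp: F_poly_def Pi_poly_def vp_def ds0 I_set_def coeff_monom split: if_splits)
next
  case (Suc N)
  define A where "A k = (\<lambda>i. a ((i + k) mod p))" for k
  have "\<forall>k. \<exists>Q. F_poly p (A k) N = Q * Pi_poly p N \<and>
          (\<forall>t. coeff Q t \<noteq> 0 \<longrightarrow> t \<in> I_set p N)"
  proof
    fix k
    have "(\<Sum>i<p. A k i) = 0" unfolding A_def using rot[where f=a and p=p and k=k] Suc.prems by simp
    then show "\<exists>Q. F_poly p (A k) N = Q * Pi_poly p N \<and>
          (\<forall>t. coeff Q t \<noteq> 0 \<longrightarrow> t \<in> I_set p N)" by (rule Suc.IH)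
  qed
  then have "\<exists>Q. \<forall>k. F_poly p (A k) N = Q k * Pi_poly p N \<and>
          (\<forall>t. coeff (Q k) t \<noteq> 0 \<longrightarrow> t \<in> I_set p N)" by (rule choice)
  then obtain Q where QQ: "\<forall>k. F_poly p (A k) N = Q k * Pi_poly p N \<and>
          (\<forall>t. coeff (Q k) t \<noteq> 0 \<longrightarrow> t \<in> I_set p N)" by blast
  have QF: "\<And>k. F_poly p (A k) N = Q k * Pi_poly p N" using QQ by blast
  have Qs: "\<And>k t. coeff (Q k) t \<noteq> 0 \<Longrightarrow> t \<in> I_set p N" using QQ by blast
  have "(\<Sum>k<p. F_poly p (A k) N) = (\<Sum>n<p^N. monom (\<Sum>k<p. A k (vp p n)) n)"
    unfolding F_poly_def by (subst sum.swap) (simp add: monom_sum)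
  also have "\<dots> = 0"
  proof (intro sum.neutral ballI)
    fix n
    have "(\<Sum>k<p. A k (vp p n)) = (\<Sum>k<p. a ((k + vp p n) mod p))"
      unfolding A_def by (simp add: add.commute)
    also have "\<dots> = 0" using rot[where f=a and p=p and k="vp p n"] Suc.prems by simp
    finally show "monom (\<Sum>k<p. A k (vp p n)) n = 0" by simp
  qed
  finally have "(\<Sum>k<p. Q k) * Pi_poly p N = 0" by (simp add: QF sum_distrib_right)
  then have sQ: "(\<Sum>k<p. Q k) = 0" using Pi_nz[OF p] by simp
  define y :: "complex poly" where "y = monom 1 (p ^ N)"
  define R where "R = - (\<Sum>k<p. Q k * (\<Sum>i<k. y ^ i))"
  have "(1 - y) * R = - (\<Sum>k<p. Q k * (1 - y ^ k))"
    unfolding R_def one_diff_power_eq by (simp add: sum_distrib_left algebra_simps)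
  also have "\<dots> = (\<Sum>k<p. y ^ k * Q k) - (\<Sum>k<p. Q k)"
    by (simp add: algebra_simps sum_subtractf)
  finally have R1: "(\<Sum>k<p. y ^ k * Q k) = (1 - y) * R" using sQ by simp
  have PiS: "Pi_poly p (Suc N) = Pi_poly p N * (1 - y)"
    unfolding Pi_poly_def y_def by simp
  have "F_poly p a (Suc N) = (\<Sum>k<p. y ^ k * Q k) * Pi_poly p N"
    using F_step[OF p, of a N] unfolding A_def[symmetric] QF sum_distrib_right
    by (simp add: y_def monom_power ac_simps)
  also have "\<dots> = R * Pi_poly p (Suc N)" unfolding R1 PiS by (simp add: ac_simps)
  finally have E: "F_poly p a (Suc N) = R * Pi_poly p (Suc N)" .
  have supp: "coeff R t \<noteq> 0 \<Longrightarrow> t \<in> I_set p (Suc N)" for t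
  proof -
    assume "coeff R t \<noteq> 0"
    have Rk: "Q k * (\<Sum>i<k. y ^ i) = (\<Sum>i<k. monom 1 (i*p^N) * Q k)" for k
      unfolding sum_distrib_left
    proof (rule sum.cong[OF refl])
      fix i
      show "Q k * y ^ i = monom 1 (i*p^N) * Q k"
        unfolding y_def monom_power by (simp add: mult.commute)
    qed
    have "coeff R t = - (\<Sum>k<p. \<Sum>i<k. coeff (monom 1 (i*p^N) * Q k) t)"
      unfolding R_def Rk by (simp add: coeff_sum)
    with \<open>coeff R t \<noteq> 0\<close> have "(\<Sum>k<p. \<Sum>i<k. coeff (monom 1 (i*p^N) * Q k) t) \<noteq> 0"
      by simp
    then obtain k where k1: "k < p" and kn:
      "(\<Sum>i<k. coeff (monom 1 (i*p^N) * Q k) t) \<noteq> 0"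
      by (rule sum.not_neutral_contains_not_neutral) simp
    from kn obtain i where "i < k" and "coeff (monom 1 (i*p^N) * Q k) t \<noteq> 0"
      by (rule sum.not_neutral_contains_not_neutral) simp
    with k1 have ki: "k < p" "i < k" "coeff (monom 1 (i * p^N) * Q k) t \<noteq> 0" by auto
    then have ti: "\<not> t < i * p^N" and cq: "coeff (Q k) (t - i*p^N) \<noteq> 0"
      by (auto simp: coeff_monom_mult split: if_splits)
    define j where "j = t - i * p^N"
    have jI: "j \<in> I_set p N" using Qs[OF cq] j_def by simp
    have tj: "t = j + i * p^N" using ti j_def by simp
    have jl: "j < p^N" using jI by (simp add: I_set_def)
    have ip: "i \<le> p - 2" using ki by simp
    have tl: "t < p ^ Suc N"
    proof -
      have "(i + 1) * p^N \<le> p * p^N" using ki by (intro mult_le_mono1) simp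
      then show ?thesis using tj jl by (simp add: algebra_simps)
    qed
    have dg: "t div p ^ l mod p \<le> p - 2" if l: "l < Suc N" for l
    proof (cases "l = N")
      case True
      have "p ^ N \<noteq> 0" using p by simp
      then have "t div p ^ N = i" using tj jl by simp
      then show ?thesis using True ip ki by simp
    next
      case False
      then have lN: "l < N" using l by simp
      have pp: "p ^ N = p ^ l * (p * p ^ (N - l - 1))"
        using lN by (simp flip: power_add power_Suc)
      have t2: "t = j + (i * p ^ (N - l - 1) * p) * p ^ l"
        using tj unfolding pp by (simp add: ac_simps)
      have "p ^ l \<noteq> 0" using p by simp
      then have "t div p ^ l = (i * p ^ (N - l - 1)) * p + j div p ^ l"
        using t2 by simp
      then have "t div p ^ l mod p = j div p ^ l mod p" by simp
      then show ?thesis using jI lN by (simp add: I_set_def)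
    qed
    show ?thesis using tl dg by (simp add: I_set_def)
  qed
  show ?case
  proof (intro exI[of _ R] conjI allI impI)
    show "F_poly p a (Suc N) = R * Pi_poly p (Suc N)" by (rule E)
  next
    fix t assume "coeff R t \<noteq> 0"
    then show "t \<in> I_set p (Suc N)" by (rule supp)
  qed
qed

theorem theorem2p2:
  fixes p N :: nat and a :: "nat \<Rightarrow> complex"
  assumes "p \<ge> 2"
    and "(\<Sum>i<p. a i) = 0"
    and "N \<ge> 1"
  shows "\<exists>c :: nat \<Rightarrow> complex.
           F_poly p a N =
             (\<Sum>j\<in>I_set p N. monom (c j) j) * (\<Prod>m<N. 1 - monom 1 (p ^ m))"
proof -
  obtain Q where QF: "F_poly p a N = Q * Pi_poly p N"
    and Qs: "\<And>t. coeff Q t \<noteq> 0 \<Longrightarrow> t \<in> I_set p N"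
  proof -
    from main[OF assms(1,2), of N] obtain Q where
      "F_poly p a N = Q * Pi_poly p N \<and> (\<forall>t. coeff Q t \<noteq> 0 \<longrightarrow> t \<in> I_set p N)"
      by (elim exE)
    note H = this
    have h1: "F_poly p a N = Q * Pi_poly p N" by (rule conjunct1[OF H])
    have h2: "t \<in> I_set p N" if "coeff Q t \<noteq> 0" for t
      by (rule mp[OF spec[OF conjunct2[OF H]] that])
    show ?thesis by (rule that[OF h1 h2])
  qed
  have fin: "finite (I_set p N)" unfolding I_set_def by simp
  define S where "S = (\<Sum>j\<in>I_set p N. monom (coeff Q j) j)"
  have "Q = S" unfolding S_def
  proof (rule poly_eqI)
    fix t
    have "coeff (\<Sum>j\<in>I_set p N. monom (coeff Q j) j) t =
          (\<Sum>j\<in>I_set p N. if j = t then coeff Q j else 0)"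
      by (simp add: coeff_sum coeff_monom)
    also have "\<dots> = (if t \<in> I_set p N then coeff Q t else 0)"
      using fin by (simp add: sum.delta')
    also have "\<dots> = coeff Q t" using Qs by auto
    finally show "coeff Q t = coeff (\<Sum>j\<in>I_set p N. monom (coeff Q j) j) t" by simp
  qed
  then have "F_poly p a N = S * Pi_poly p N" using QF by simp
  then show ?thesis unfolding S_def Pi_poly_def by (rule exI[of _ "coeff Q"])
qed

end
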